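(* Let $\rho=(a^b)$ be a partition of $n=ab$ with $a,b\ge 2$, and put $\alpha(\rho)=(a+1,a^{\,b-2},a-1)$ and $\beta(\rho)=(a^{\,b-1},a-1,1)$. Then: (1) $\deg_{G_n}(\rho)=2$; (2) the neighbors of $\rho$ in $G_n$ are exactly $\alpha(\rho)$ and $\beta(\rho)$; (3) $\rho,\alpha(\rho),\beta(\rho)$ form a triangle in $G_n$; (4) this triangle is the unique maximal clique of $G_n$ containing $\rho$; (5) consequently $\rho\in D_2(n)\cap L_2(n)$.
   Context: The partition graph $G_n$ has as vertices the integer partitions of $n$; two partitions are adjacent if one is obtained from the other by a single elementary unit transfer followed by reordering: decrease one part by $1$ and either increase a different part by $1$ or create a new part equal to $1$, then delete a part that became $0$ and sort in nonincreasing order (the result being different from the original). Exponent notation $a^k$ denotes $k$ parts equal to $a$; when $b=2$, $\alpha(\rho)=(a+1,a-1)$. $D_d(n)$ is the set of vertices of $G_n$ of degree $d$. The local simplex dimension of a vertex $v$ is $m-1$, where $m$ is the largest size of a clique of $G_n$ containing $v$ (i.e. the largest dimension of a simplex containing $v$ in the clique complex of $G_n$); $L_r(n)$ is the set of vertices of local simplex dimension $r$. *)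

theory Defs
  imports Main
begin

definition is_partition :: "nat \<Rightarrow> nat list \<Rightarrow> bool" where
  "is_partition n p \<longleftrightarrow> sum_list p = n \<and> (\<forall>x\<in>set p. 0 < x) \<and> sorted_wrt (\<ge>) p"

definition partitions :: "nat \<Rightarrow> nat list set" where
  "partitions n = {p. is_partition n p}"

definition normalize :: "nat list \<Rightarrow> nat list" where
  "normalize q = rev (sort (filter (\<lambda>x. x \<noteq> 0) q))"

definition transfer_step :: "nat list \<Rightarrow> nat list \<Rightarrow> bool" where
  "transfer_step p q \<longleftrightarrow> q \<noteq> p \<and>
     ((\<exists>i<length p. \<exists>j<length p. i \<noteq> j \<and>
          q = normalize ((p[i := p ! i - 1])[j := p ! j + 1])) \<or>
      (\<exists>i<length p. q = normalize (p[i := p ! i - 1] @ [1])))"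

definition G_edge :: "nat \<Rightarrow> nat list \<Rightarrow> nat list \<Rightarrow> bool" where
  "G_edge n p q \<longleftrightarrow> p \<in> partitions n \<and> q \<in> partitions n \<and>
     (transfer_step p q \<or> transfer_step q p)"

definition neighbors :: "nat \<Rightarrow> nat list \<Rightarrow> nat list set" where
  "neighbors n p = {q. G_edge n p q}"

definition degree :: "nat \<Rightarrow> nat list \<Rightarrow> nat" where
  "degree n p = card (neighbors n p)"

definition is_clique :: "nat \<Rightarrow> nat list set \<Rightarrow> bool" where
  "is_clique n C \<longleftrightarrow> C \<subseteq> partitions n \<and> (\<forall>p\<in>C. \<forall>q\<in>C. p \<noteq> q \<longrightarrow> G_edge n p q)"

definition is_maximal_clique :: "nat \<Rightarrow> nat list set \<Rightarrow> bool" where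
  "is_maximal_clique n C \<longleftrightarrow> is_clique n C \<and> (\<forall>C'. is_clique n C' \<and> C \<subseteq> C' \<longrightarrow> C' = C)"

definition local_simplex_dim :: "nat \<Rightarrow> nat list \<Rightarrow> nat" where
  "local_simplex_dim n v = Max {card C | C. is_clique n C \<and> v \<in> C} - 1"

definition D :: "nat \<Rightarrow> nat \<Rightarrow> nat list set" where
  "D d n = {v \<in> partitions n. degree n v = d}"

definition L :: "nat \<Rightarrow> nat \<Rightarrow> nat list set" where
  "L r n = {v \<in> partitions n. local_simplex_dim n v = r}"

end

theory Submission imports Defs "HOL-Library.Multiset" begin
lemma sorted_desc_eq:
  assumes "sorted_wrt (\<ge>) xs" "sorted_wrt (\<ge>) (ys::nat list)" "mset xs = mset ys"
  shows "xs = ys"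
proof -
  have "sort (rev xs) = rev ys"
    by (rule properties_for_sort) (use assms in \<open>auto simp: sorted_wrt_rev\<close>)
  moreover have "sort (rev xs) = rev xs"
    using assms by (simp add: sorted_wrt_rev sorted_sort_id)
  ultimately show ?thesis by simp
qed

lemma normalize_eqI:
  assumes "sorted_wrt (\<ge>) ys" "mset (filter (\<lambda>x. x\<noteq>0) r) = mset (ys::nat list)"
  shows "normalize r = ys"
proof -
  have "sort (filter (\<lambda>x. x\<noteq>0) r) = rev ys"
    by (rule properties_for_sort) (use assms in \<open>auto simp: sorted_wrt_rev\<close>)
  then show ?thesis unfolding normalize_def by (simp add: filter_mset_eq_conv)
qed

lemma set_normalize: "set (normalize r) = {x\<in>set r. x \<noteq> 0}"
  unfolding normalize_def by auto

lemma mset_normalize: "mset (normalize r) = filter_mset (\<lambda>x. x\<noteq>0) (mset r)"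
  unfolding normalize_def by (simp add: filter_mset_eq_conv)

lemma normalize_sorted: "sorted_wrt (\<ge>) (normalize r)"
  unfolding normalize_def by (simp add: sorted_wrt_rev)

lemma sorted_rep[simp]: "sorted_wrt (\<ge>) (replicate n (x::nat))"
  by (induction n) auto

lemma mset_rep_upd: "i < n \<Longrightarrow> mset ((replicate n x)[i := y]) = add_mset y (replicate_mset (n-1) x)"
proof -
  assume h: "i < n"
  have "mset ((replicate n x)[i := y]) = add_mset y (mset (replicate n x) - {#x#})"
    using mset_update[of i "replicate n x" y] h by simp
  moreover have "replicate_mset n x - {#x#} = replicate_mset (n-1) x" using h by (cases n) auto
  ultimately show ?thesis by simp
qed

lemma mset_rep_upd2: "i < n \<Longrightarrow> j < n \<Longrightarrow> i \<noteq> j \<Longrightarrow>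
   mset (((replicate n x)[i := y])[j := z]) = add_mset z (add_mset y (replicate_mset (n-2) x))"
proof -
  assume h: "i < n" "j < n" "i \<noteq> j"
  define k where "k = n - 2"
  have n: "n = Suc (Suc k)" using h unfolding k_def by arith
  have "mset (((replicate n x)[i := y])[j := z]) = add_mset z (mset ((replicate n x)[i := y]) - {#x#})"
    using h mset_update[of j "(replicate n x)[i := y]" z] by simp
  also have "\<dots> = add_mset z (add_mset y (replicate_mset (n - 1) x) - {#x#})" using h by (simp only: mset_rep_upd)
  also have "\<dots> = add_mset z (add_mset y (replicate_mset (Suc k) x) - {#x#})" by (simp add: n)
  also have "\<dots> = add_mset z (add_mset y (replicate_mset k x))"
    by (cases "x = y") (auto simp: diff_add_mset_swap)
  finally show ?thesis by (simp add: n)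
qed

lemma fwd1:
  assumes "a \<ge> 2" "b \<ge> 2" "i < b" "j < b" "i \<noteq> j"
  shows "normalize (((replicate b a)[i := a - 1])[j := a + 1]) = [a + 1] @ replicate (b - 2) a @ [a - 1]"
proof (rule normalize_eqI)
  show "sorted_wrt (\<ge>) ([a + 1] @ replicate (b - 2) a @ [a - 1])"
    by (auto simp: sorted_wrt_append)
  obtain m where b: "b = Suc (Suc m)" using assms(2) by (metis add_2_eq_Suc le_Suc_ex)
  have f: "filter (\<lambda>x. x\<noteq>0) (((replicate b a)[i := a - 1])[j := a + 1]) = ((replicate b a)[i := a - 1])[j := a + 1]"
    using assms set_update_subset_insert[of "(replicate b a)[i := a - 1]" j "a+1"]
      set_update_subset_insert[of "replicate b a" i "a-1"]
    by (intro filter_True) auto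
  show "mset (filter (\<lambda>x. x\<noteq>0) (((replicate b a)[i := a - 1])[j := a + 1])) = mset ([a + 1] @ replicate (b - 2) a @ [a - 1])"
    unfolding f using assms by (simp add: mset_rep_upd2)
qed

lemma fwd2:
  assumes "a \<ge> 2" "b \<ge> 2" "i < b"
  shows "normalize ((replicate b a)[i := a - 1] @ [1]) = replicate (b - 1) a @ [a - 1, 1]"
proof (rule normalize_eqI)
  show "sorted_wrt (\<ge>) (replicate (b - 1) a @ [a - 1, 1])"
    using assms by (auto simp: sorted_wrt_append)
  obtain m where b: "b = Suc m" using assms(2) by (metis Suc_le_D numeral_2_eq_2 Suc_leD)
  have f: "filter (\<lambda>x. x\<noteq>0) ((replicate b a)[i := a - 1] @ [1]) = (replicate b a)[i := a - 1] @ [1]"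
    using assms 
      set_update_subset_insert[of "replicate b a" i "a-1"]
    by (intro filter_True) auto
  show "mset (filter (\<lambda>x. x\<noteq>0) ((replicate b a)[i := a - 1] @ [1])) = mset (replicate (b - 1) a @ [a - 1, 1])"
    unfolding f using assms by (simp add: mset_rep_upd)
qed

lemma rev1:
  assumes a: "a \<ge> 2" and ab: "b \<ge> 2" and q: "is_partition (a*b) q" and i: "i < length q" and j: "j < length q"
    and ij: "i \<noteq> j" and r: "replicate b a = normalize ((q[i := q ! i - 1])[j := q ! j + 1])"
  shows "q = [a + 1] @ replicate (b - 2) a @ [a - 1] \<or> q = replicate (b - 1) a @ [a - 1, 1]"
proof -
  define x where "x = q ! i"
  define y where "y = q ! j"
  define rr where "rr = (q[i := q ! i - 1])[j := q ! j + 1]"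
  define L where "L = length q"
  have pos: "\<And>k. k < L \<Longrightarrow> q ! k > 0" using q unfolding is_partition_def L_def by auto
  have sr: "set (normalize rr) = {a}" using r ab unfolding rr_def[symmetric] by (metis set_replicate not_numeral_le_zero le0 le_zero_eq)
  have hr: "\<And>k. k < L \<Longrightarrow> rr ! k \<noteq> 0 \<Longrightarrow> rr ! k = a"
  proof -
    fix k assume "k < L" "rr ! k \<noteq> 0"
    then have "rr ! k \<in> set (normalize rr)" unfolding set_normalize rr_def L_def by (auto simp: nth_mem)
    then show "rr ! k = a" using sr by auto
  qed
  have "rr ! j = y + 1" using j unfolding rr_def y_def by simp
  then have yj: "y + 1 = a" using hr[of j] j unfolding L_def by simp
  have "rr ! i = x - 1" using i ij unfolding rr_def x_def by simp
  then have xi: "x - 1 = 0 \<or> x - 1 = a" using hr[of i] i unfolding L_def by metis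
  have x1: "x = 1 \<or> x = a + 1" using xi pos[of i] i unfolding x_def L_def by auto
  have oth: "q ! k = a" if "k < L" "k \<noteq> i" "k \<noteq> j" for k
  proof -
    have "rr ! k = q ! k" using that unfolding rr_def by simp
    then show ?thesis using hr[OF that(1)] pos[OF that(1)] by simp
  qed
  have qeq: "q = ((replicate L a)[i := x])[j := a - 1]"
  proof (rule nth_equalityI)
    show "length q = length (((replicate L a)[i := x])[j := a - 1])" unfolding L_def by simp
    fix k assume k: "k < length q"
    show "q ! k = ((replicate L a)[i := x])[j := a - 1] ! k"
    proof (cases "k = j")
      case True then show ?thesis using yj j unfolding y_def L_def by simp
    next
      case False
      then show ?thesis using oth[of k] k i unfolding x_def L_def by (cases "k = i") simp_all
    qed
  qed
  have xa: "x \<noteq> a" using x1 a by auto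
  have mq: "mset q = add_mset (a - 1) (add_mset x (replicate_mset (L - 2) a))"
    apply (subst qeq) using i j ij unfolding L_def[symmetric] by (rule mset_rep_upd2)
  have "sum_list q = a * b" using q unfolding is_partition_def by simp
  then have "sum_mset (mset q) = a * b" by (simp add: sum_mset_sum_list)
  then have sm: "a - 1 + x + (L - 2) * a = a * b" unfolding mq by (simp add: algebra_simps)
  have L2: "L \<ge> 2" using i j ij unfolding L_def by arith
  define m where "m = L - 2"
  have mq': "mset q = add_mset (a - 1) (add_mset x (replicate_mset m a))" using mq unfolding m_def .
  have sm': "a - 1 + x + m * a = a * b" using sm unfolding m_def .
  show ?thesis
  proof (cases "x = 1")
    case True
    then have "(m + 1) * a = b * a" using sm' a by (simp add: algebra_simps)
    then have "b = m + 1" using a by (metis mult_cancel2 not_numeral_le_zero le_zero_eq)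
    then have mm: "mset q = mset (replicate (b - 1) a @ [a - 1, 1])" using mq' True by simp
    have "q = replicate (b - 1) a @ [a - 1, 1]"
      by (rule sorted_desc_eq[OF _ _ mm]) (use q a in \<open>auto simp: is_partition_def sorted_wrt_append\<close>)
    then show ?thesis by simp
  next
    case False
    then have x: "x = a + 1" using x1 by simp
    then have "(m + 2) * a = b * a" using sm' a by (simp add: algebra_simps)
    then have "b = m + 2" using a by (metis mult_cancel2 not_numeral_le_zero le_zero_eq)
    then have mm: "mset q = mset ([a + 1] @ replicate (b - 2) a @ [a - 1])" using mq' x by simp
    have "q = [a + 1] @ replicate (b - 2) a @ [a - 1]"
      by (rule sorted_desc_eq[OF _ _ mm]) (use q a in \<open>auto simp: is_partition_def sorted_wrt_append\<close>)
    then show ?thesis by simp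
  qed
qed

lemma rev2:
  assumes a: "a \<ge> 2" and ab: "b \<ge> 2" and r: "replicate b a = normalize (rr @ [1])"
  shows False
proof -
  have "1 \<in> set (normalize (rr @ [1]))" unfolding set_normalize by simp
  then show False using r a by (metis in_set_replicate numeral_le_one_iff semiring_norm(69))
qed

lemma G_edge_symI: "G_edge n p q \<Longrightarrow> G_edge n q p" unfolding G_edge_def by auto

theorem proposition3p3:
  fixes a b n :: nat and \<rho> \<alpha> \<beta> :: "nat list"
  assumes "a \<ge> 2" and "b \<ge> 2" and "n = a * b"
    and "\<rho> = replicate b a"
    and "\<alpha> = [a + 1] @ replicate (b - 2) a @ [a - 1]"
    and "\<beta> = replicate (b - 1) a @ [a - 1, 1]"
  shows "degree n \<rho> = 2 \<and>
         neighbors n \<rho> = {\<alpha>, \<beta>} \<and>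
         is_clique n {\<rho>, \<alpha>, \<beta>} \<and> card {\<rho>, \<alpha>, \<beta>} = 3 \<and>
         is_maximal_clique n {\<rho>, \<alpha>, \<beta>} \<and>
         (\<forall>C. is_maximal_clique n C \<and> \<rho> \<in> C \<longrightarrow> C = {\<rho>, \<alpha>, \<beta>}) \<and>
         \<rho> \<in> D 2 n \<inter> L 2 n"
proof -
  note a = assms(1) and bb = assms(2) and n = assms(3) and rho = assms(4) and al = assms(5) and be = assms(6)
  define m where "m = b - 2"
  have bm: "b = m + 2" using bb unfolding m_def by simp
  have b1: "b - 1 = m + 1" using bm by simp
  have pr: "\<rho> \<in> partitions n" using a unfolding rho n partitions_def is_partition_def by (simp add: sum_list_replicate)
  have pa: "\<alpha> \<in> partitions n" using a unfolding al n partitions_def is_partition_def m_def[symmetric]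
    by (auto simp: sorted_wrt_append bm algebra_simps sum_list_replicate)
  have pb: "\<beta> \<in> partitions n" using a unfolding be n partitions_def is_partition_def b1
    by (auto simp: sorted_wrt_append bm algebra_simps sum_list_replicate)
  have lr: "length \<rho> = b" "length \<alpha> = b" "length \<beta> = b + 1"
    unfolding rho al be using bb by auto
  have ra: "\<rho> \<noteq> \<alpha>" unfolding rho al using bb a by (cases b) auto
  have rb: "\<rho> \<noteq> \<beta>" "\<alpha> \<noteq> \<beta>" using lr by auto
  have ts1: "transfer_step \<rho> \<alpha>"
    unfolding transfer_step_def using ra
    apply (intro conjI disjI1)
    apply (metis ra)
    apply (rule exI[of _ 1]) using bb apply (simp add: rho)
    apply (rule exI[of _ 0]) using fwd1[OF a bb, of 1 0] by (simp add: al)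
  have ts2: "transfer_step \<rho> \<beta>"
    unfolding transfer_step_def using rb
    apply (intro conjI disjI2)
    apply (metis rb(1))
    apply (rule exI[of _ 0]) using bb fwd2[OF a bb, of 0] by (simp add: rho be)
  have ts3: "transfer_step \<alpha> \<beta>"
    unfolding transfer_step_def
  proof (intro conjI disjI2)
    show "\<beta> \<noteq> \<alpha>" using rb by auto
    have "normalize (\<alpha>[0 := \<alpha> ! 0 - 1] @ [1]) = \<beta>"
    proof (rule normalize_eqI)
      show "sorted_wrt (\<ge>) \<beta>" using pb unfolding partitions_def is_partition_def by simp
      have "\<alpha>[0 := \<alpha> ! 0 - 1] @ [1] = [a] @ replicate m a @ [a - 1, 1]" unfolding al m_def by simp
      moreover have "filter (\<lambda>x. x \<noteq> 0) ([a] @ replicate m a @ [a - 1, 1]) = [a] @ replicate m a @ [a - 1, 1]"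
        using a by (intro filter_True) auto
      ultimately show "mset (filter (\<lambda>x. x \<noteq> 0) (\<alpha>[0 := \<alpha> ! 0 - 1] @ [1])) = mset \<beta>"
        unfolding be b1 by simp
    qed
    then show "\<exists>i<length \<alpha>. \<beta> = normalize (\<alpha>[i := \<alpha> ! i - 1] @ [1])"
      using lr bb by (intro exI[of _ 0]) auto
  qed
  have e1: "G_edge n \<rho> \<alpha>" "G_edge n \<rho> \<beta>" "G_edge n \<alpha> \<beta>"
    using pr pa pb ts1 ts2 ts3 unfolding G_edge_def by auto
  have nb: "neighbors n \<rho> = {\<alpha>, \<beta>}"
  proof
    show "{\<alpha>, \<beta>} \<subseteq> neighbors n \<rho>" using e1 unfolding neighbors_def by auto
    show "neighbors n \<rho> \<subseteq> {\<alpha>, \<beta>}"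
    proof
      fix q assume "q \<in> neighbors n \<rho>"
      then have qp: "q \<in> partitions n" and t: "transfer_step \<rho> q \<or> transfer_step q \<rho>"
        unfolding neighbors_def G_edge_def by auto
      from t show "q \<in> {\<alpha>, \<beta>}"
      proof
        assume "transfer_step \<rho> q"
        then consider (c1) i j where "i < b" "j < b" "i \<noteq> j" "q = normalize ((\<rho>[i := \<rho> ! i - 1])[j := \<rho> ! j + 1])"
          | (c2) i where "i < b" "q = normalize (\<rho>[i := \<rho> ! i - 1] @ [1])"
          unfolding transfer_step_def lr by blast
        then show ?thesis
        proof cases
          case c1 then show ?thesis using fwd1[OF a bb c1(1-3)] by (simp add: rho al)
        next
          case c2 then show ?thesis using fwd2[OF a bb c2(1)] by (simp add: rho be)
        qed
      next
        assume "transfer_step q \<rho>"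
        then consider (c1) i j where "i < length q" "j < length q" "i \<noteq> j" "\<rho> = normalize ((q[i := q ! i - 1])[j := q ! j + 1])"
          | (c2) i where "i < length q" "\<rho> = normalize (q[i := q ! i - 1] @ [1])"
          unfolding transfer_step_def by blast
        then show ?thesis
        proof cases
          case c1
          have "is_partition (a*b) q" using qp n unfolding partitions_def by simp
          from rev1[OF a bb this c1(1-3)] c1(4) show ?thesis by (simp add: rho al be)
        next
          case c2
          then have "replicate b a = normalize (q[i := q ! i - 1] @ [1])" using rho by simp
          from rev2[OF a bb this] show ?thesis by (rule FalseE)
        qed
      qed
    qed
  qed
  have deg: "degree n \<rho> = 2" unfolding degree_def nb using rb by simp
  have card3: "card {\<rho>, \<alpha>, \<beta>} = 3" using ra rb by simp
  have e2: "G_edge n \<alpha> \<rho>" "G_edge n \<beta> \<rho>" "G_edge n \<beta> \<alpha>"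
    using e1 by (simp_all add: G_edge_symI)
  have cl: "is_clique n {\<rho>, \<alpha>, \<beta>}" unfolding is_clique_def
  proof (intro conjI ballI impI)
    show "{\<rho>, \<alpha>, \<beta>} \<subseteq> partitions n" using pr pa pb by blast
    fix p q assume "p \<in> {\<rho>, \<alpha>, \<beta>}" "q \<in> {\<rho>, \<alpha>, \<beta>}" "p \<noteq> q"
    then show "G_edge n p q" using e1 e2 by blast
  qed
  have sub: "C \<subseteq> {\<rho>, \<alpha>, \<beta>}" if "is_clique n C" "\<rho> \<in> C" for C
  proof
    fix p assume p: "p \<in> C"
    show "p \<in> {\<rho>, \<alpha>, \<beta>}"
    proof (cases "p = \<rho>")
      case False
      have cc: "\<forall>p\<in>C. \<forall>q\<in>C. p \<noteq> q \<longrightarrow> G_edge n p q"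
        using that(1) unfolding is_clique_def by (rule conjunct2)
      have "\<rho> \<noteq> p" using False by (rule not_sym)
      then have "G_edge n \<rho> p" by (rule cc[rule_format, OF that(2) p])
      then have "p \<in> neighbors n \<rho>" unfolding neighbors_def by simp
      then have "p \<in> {\<alpha>, \<beta>}" by (simp only: nb)
      then show ?thesis by blast
    qed simp
  qed
  have mc: "is_maximal_clique n {\<rho>, \<alpha>, \<beta>}"
    unfolding is_maximal_clique_def
  proof (intro conjI allI impI)
    fix C' assume h: "is_clique n C' \<and> {\<rho>, \<alpha>, \<beta>} \<subseteq> C'"
    then have "\<rho> \<in> C'" by blast
    then have "C' \<subseteq> {\<rho>, \<alpha>, \<beta>}" using sub h by blast
    then show "C' = {\<rho>, \<alpha>, \<beta>}" using h by (intro equalityI) blast+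
  qed (rule cl)
  have uniq: "\<forall>C. is_maximal_clique n C \<and> \<rho> \<in> C \<longrightarrow> C = {\<rho>, \<alpha>, \<beta>}"
  proof (intro allI impI)
    fix C assume h: "is_maximal_clique n C \<and> \<rho> \<in> C"
    then have c1: "is_clique n C" and c2: "\<forall>C'. is_clique n C' \<and> C \<subseteq> C' \<longrightarrow> C' = C"
      unfolding is_maximal_clique_def by blast+
    have "C \<subseteq> {\<rho>, \<alpha>, \<beta>}" using sub c1 h by blast
    then have "{\<rho>, \<alpha>, \<beta>} = C" using c2 cl by blast
    then show "C = {\<rho>, \<alpha>, \<beta>}" by (rule sym)
  qed
  have fin: "finite {card C | C. is_clique n C \<and> \<rho> \<in> C}"
  proof (rule finite_subset[where B = "card ` Pow {\<rho>, \<alpha>, \<beta>}"])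
    show "{card C | C. is_clique n C \<and> \<rho> \<in> C} \<subseteq> card ` Pow {\<rho>, \<alpha>, \<beta>}"
    proof
      fix y assume "y \<in> {card C | C. is_clique n C \<and> \<rho> \<in> C}"
      then obtain C where "y = card C" "is_clique n C" "\<rho> \<in> C" by blast
      then show "y \<in> card ` Pow {\<rho>, \<alpha>, \<beta>}" using sub[of C] by blast
    qed
  qed simp
  have "Max {card C | C. is_clique n C \<and> \<rho> \<in> C} = 3"
  proof (rule Max_eqI[OF fin])
    show "3 \<in> {card C | C. is_clique n C \<and> \<rho> \<in> C}"
      unfolding mem_Collect_eq by (rule exI[of _ "{\<rho>, \<alpha>, \<beta>}"]) (simp only: cl card3 insertI1 simp_thms)
    fix y assume "y \<in> {card C | C. is_clique n C \<and> \<rho> \<in> C}"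
    then obtain C where y: "y = card C" "is_clique n C" "\<rho> \<in> C" by blast
    have "card C \<le> card {\<rho>, \<alpha>, \<beta>}" by (rule card_mono) (simp, rule sub[OF y(2,3)])
    then show "y \<le> 3" using y(1) card3 by simp
  qed
  then have "local_simplex_dim n \<rho> = 2" unfolding local_simplex_dim_def by simp
  then have "\<rho> \<in> D 2 n \<inter> L 2 n" unfolding D_def L_def using pr deg by simp
  then show ?thesis using deg nb cl card3 mc uniq by (intro conjI)
qed

end
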